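(* Let $\hat H(w)=\frac1{1+w}$. Let $(\alpha,\beta)\in\mathbb{R}^2$ satisfy $\alpha<2$, $\beta>\alpha-1$, and one of: (a) $-8<\alpha<2$ and $-16-4\alpha<\beta<\alpha^2/4$; (b) $\alpha^2/4\le\beta\le 1$; (c) $1<\beta<16$, $\beta\ge\alpha^2/4$, and $\alpha<2\big(8-8\beta^{1/4}+\sqrt\beta\big)$. Then for every $\tilde\tau>0$, $\Phi(w)=0$ has no root on the imaginary axis and all its roots satisfy $\operatorname{Re} w<0$; i.e. the equilibrium is locally asymptotically stable for every mean delay. (This is the region bounded by the line $\beta=-4\alpha-16$, the curve $\alpha=2(8-8\beta^{1/4}+\sqrt\beta)$ and the line $\beta=\alpha-1$, and it contains the kernel-independent region $\{|\alpha|-1<\beta<1\}$.)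
   Context: For a delay-to-time-constant ratio $\tilde\tau>0$ and $\alpha,\beta\in\mathbb{R}$, the rescaled characteristic equation of the linearized coupled Wilson–Cowan system with kernel transform $\hat H$ is $$\Phi(w):=(w+\tilde\tau)^4-\alpha\,\tilde\tau^2(w+\tilde\tau)^2\hat H(w)^2+\beta\,\tilde\tau^4\hat H(w)^4=0.$$ For the weak Gamma kernel $h(t)=\tau^{-1}e^{-t/\tau}$ (mean $\tau$), $\hat H(w)=(1+w)^{-1}$. The equilibrium is locally asymptotically stable iff all roots of $\Phi$ have negative real part. *)

theory Defs
  imports "HOL-Analysis.Analysis"
begin

definition Hhat :: "complex \<Rightarrow> complex" where
  "Hhat w = 1 / (1 + w)"

text \<open>Rescaled characteristic function Phi, with tau the delay-to-time-constant ratio.\<close>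
definition Phi :: "real \<Rightarrow> real \<Rightarrow> real \<Rightarrow> complex \<Rightarrow> complex" where
  "Phi \<alpha> \<beta> \<tau> w =
     (w + of_real \<tau>)^4 - of_real \<alpha> * of_real \<tau>^2 * (w + of_real \<tau>)^2 * (Hhat w)^2
     + of_real \<beta> * of_real \<tau>^4 * (Hhat w)^4"

end

theory Submission
  imports Defs
begin

lemma quad_ineq:
  fixes x y :: real
  assumes "y \<noteq> 0" "x^2 + y^2 \<le> 1"
  shows "x + y^2/4 < 1"
proof -
  have "y^2 \<ge> 0" by simp
  then have "x^2 \<le> 1" using assms(2) by linarith
  then have "\<bar>x\<bar>^2 \<le> 1^2" by simp
  then have u: "\<bar>x\<bar> \<le> 1" by (rule power2_le_imp_le) simp
  have "\<bar>x\<bar> + y^2/4 \<le> \<bar>x\<bar> + (1 - x^2)/4" using assms by simp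
  also have "\<dots> = 1 - (1 - \<bar>x\<bar>)*(3 - \<bar>x\<bar>)/4"
  proof -
    have g: "u + (1 - u^2)/4 = 1 - (1-u)*(3-u)/4" for u :: real by (simp add: field_simps power2_eq_square)
    have "x^2 = \<bar>x\<bar>^2" by simp
    then show ?thesis using g[of "\<bar>x\<bar>"] by simp
  qed
  finally have h: "\<bar>x\<bar> + y^2/4 \<le> 1 - (1 - \<bar>x\<bar>)*(3 - \<bar>x\<bar>)/4" .
  show ?thesis
  proof (cases "\<bar>x\<bar> = 1")
    case True
    have "x^2 = \<bar>x\<bar>^2" by simp
    then have "x^2 = 1" using True by simp
    then have "y^2 \<le> 0" using assms by simp
    then show ?thesis using assms(1) by simp
  next
    case False
    then have "(1 - \<bar>x\<bar>)*(3 - \<bar>x\<bar>) > 0" using u by (intro mult_pos_pos) auto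
    then show ?thesis using h by linarith
  qed
qed

lemma keyc:
  fixes x y r :: real
  assumes "1 < r" "r < 2" "x^2 < (2-r)^2" "x^2 + y^2 = r^2"
  shows "x + y^2/4 < 1"
proof -
  have "\<bar>x\<bar>^2 < (2-r)^2" using assms by simp
  then have u: "\<bar>x\<bar> < 2 - r" by (rule power2_less_imp_less) (use assms in simp)
  have "1 - \<bar>x\<bar> - y^2/4 = ((2 - \<bar>x\<bar> - r)*(2 - \<bar>x\<bar> + r))/4"
    using assms(4) by (simp add: algebra_simps power2_eq_square flip: abs_mult) 
  moreover have "(2 - \<bar>x\<bar> - r)*(2 - \<bar>x\<bar> + r) > 0" using u assms by (intro mult_pos_pos) auto
  ultimately show ?thesis by linarith
qed

lemma key_real:
  fixes \<alpha> \<beta> x y :: real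
  assumes "\<alpha> < 2" and "\<beta> > \<alpha> - 1"
    and C: "(-8 < \<alpha> \<and> \<alpha> < 2 \<and> -16 - 4*\<alpha> < \<beta> \<and> \<beta> < \<alpha>^2/4)
       \<or> (\<alpha>^2/4 \<le> \<beta> \<and> \<beta> \<le> 1)
       \<or> (1 < \<beta> \<and> \<beta> < 16 \<and> \<beta> \<ge> \<alpha>^2/4 \<and> \<alpha> < 2 * (8 - 8 * root 4 \<beta> + sqrt \<beta>))"
    and E1: "(x^2-y^2)^2 - (2*x*y)^2 - \<alpha>*(x^2-y^2) + \<beta> = 0"
    and E2: "2*(x^2-y^2)*(2*x*y) - \<alpha>*(2*x*y) = 0"
  shows "x + y^2/4 < 1"
proof (cases "y = 0")
  case True
  define t where "t = x^2"
  have "t^2 - \<alpha>*t + \<beta> = 0" using E1 True by (simp add: t_def)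
  moreover have "t^2 - \<alpha>*t + \<beta> = (t-1)^2 + (2-\<alpha>)*(t-1) + (1-\<alpha>+\<beta>)" by (simp add: algebra_simps power2_eq_square)
  ultimately have "t < 1" using assms(1,2)
    by (smt (verit) mult_nonneg_nonneg zero_le_power2)
  then have "x < 1" unfolding t_def by (smt (verit) one_le_power)
  then show ?thesis using True by simp
next
  case yne: False
  show ?thesis
  proof (cases "x = 0")
    case True
    define s where "s = y^2"
    have g: "s^2 + \<alpha> * s + \<beta> = 0" using E1 True by (simp add: s_def power2_eq_square algebra_simps)
    have ab: "8 + \<alpha> > 0 \<and> 16 + 4*\<alpha> + \<beta> > 0"
    proof (cases "\<beta> < \<alpha>^2/4")
      case True then show ?thesis using C by auto
    next
      case False
      then have b16: "\<beta> < 16" using C by auto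
      have "\<alpha>^2 < 8^2" using False b16 by simp
      then have "\<bar>\<alpha>\<bar>^2 < 8^2" by simp
      then have a8: "\<bar>\<alpha>\<bar> < 8" by (rule power2_less_imp_less) simp
      have q1: "16 + 4*\<alpha> + \<beta> \<ge> (4 + \<alpha>/2)^2" using False by (simp add: power2_eq_square algebra_simps)
      have "4 + \<alpha>/2 > 0" using a8 by (simp add: abs_less_iff)
      then have q2: "(4 + \<alpha>/2)^2 > 0" by simp
      have "8 + \<alpha> > 0" using a8 by (simp add: abs_less_iff)
      with q1 q2 show ?thesis by linarith
    qed
    have "s^2 + \<alpha> * s + \<beta> = (s-4)^2 + (8+\<alpha>)*(s-4) + (16+4*\<alpha>+\<beta>)" by (simp add: algebra_simps power2_eq_square)
    then have "s < 4" using g ab by (smt (verit) mult_nonneg_nonneg zero_le_power2)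
    then show ?thesis using True by (simp add: s_def)
  next
    case xne: False
    have "(2*x*y) * (2*(x^2 - y^2) - \<alpha>) = 0" using E2 by (simp add: algebra_simps)
    then have "2*(x^2 - y^2) - \<alpha> = 0" using xne yne by simp
    then have p: "x^2 - y^2 = \<alpha>/2" by simp
    have "(\<alpha>/2)^2 - (2*x*y)^2 - \<alpha>*(\<alpha>/2) + \<beta> = 0" using E1 unfolding p .
    then have bq: "\<beta> = \<alpha>^2/4 + (2*x*y)^2" by (simp add: power2_eq_square field_simps)
    have xy: "(2*x*y)^2 > 0" using xne yne by simp
    define R where "R = x^2 + y^2"
    have R0: "R \<ge> 0" unfolding R_def by simp
    have "R^2 = (x^2-y^2)^2 + (2*x*y)^2" unfolding R_def by algebra
    then have RR: "R^2 = \<beta>" using bq p by (simp add: power_divide)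
    show ?thesis
    proof (cases "\<beta> \<le> 1")
      case True
      have "R^2 \<le> 1^2" using RR True by simp
      then have "R \<le> 1" by (rule power2_le_imp_le) simp
      then show ?thesis using quad_ineq[OF yne] unfolding R_def by simp
    next
      case False
      then have c: "1 < \<beta> \<and> \<beta> < 16 \<and> \<alpha> < 2 * (8 - 8 * root 4 \<beta> + sqrt \<beta>)" using C bq xy by auto
      have sb: "sqrt \<beta> = R" unfolding RR[symmetric] using R0 by simp
      define r where "r = root 4 \<beta>"
      have "r = sqrt (sqrt \<beta>)" unfolding r_def sqrt_def
        using real_root_mult_exp[of 2 2 \<beta>] by simp
      then have rR: "r = sqrt R" using sb by simp
      have r0: "r \<ge> 0" unfolding rR using R0 by simp
      have rr: "r^2 = R" using R0 by (simp add: rR)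
      have "1^2 < R^2" using RR c by simp
      then have R1: "1 < R" by (rule power2_less_imp_less) (rule R0)
      have "R^2 < 4^2" using RR c by simp
      then have R4: "R < 4" by (rule power2_less_imp_less) simp
      have "1^2 < r^2" using rr R1 by simp
      then have r1: "1 < r" by (rule power2_less_imp_less) (rule r0)
      have "r^2 < 2^2" using rr R4 by simp
      then have r2: "r < 2" by (rule power2_less_imp_less) simp
      have "x^2 = (R + \<alpha>/2)/2" using p unfolding R_def by simp
      also have "\<dots> < (2-r)^2"
      proof -
        have e2: "(2-r)^2 = R + 4 - 4*r" using rr by (simp add: power2_eq_square algebra_simps)
        have "\<alpha> < 2 * (8 - 8 * r + R)" using c sb unfolding r_def by simp
        then show ?thesis unfolding e2 by (simp add: field_simps)
      qed
      finally have "x^2 < (2-r)^2" .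
      then show ?thesis using keyc[OF r1 r2] rr R_def by simp
    qed
  qed
qed

lemma key_complex:
  fixes \<alpha> \<beta> :: real and m :: complex
  assumes "\<alpha> < 2" and "\<beta> > \<alpha> - 1"
    and C: "(-8 < \<alpha> \<and> \<alpha> < 2 \<and> -16 - 4*\<alpha> < \<beta> \<and> \<beta> < \<alpha>^2/4)
       \<or> (\<alpha>^2/4 \<le> \<beta> \<and> \<beta> \<le> 1)
       \<or> (1 < \<beta> \<and> \<beta> < 16 \<and> \<beta> \<ge> \<alpha>^2/4 \<and> \<alpha> < 2 * (8 - 8 * root 4 \<beta> + sqrt \<beta>))"
    and E: "(m^2)^2 - of_real \<alpha> * m^2 + of_real \<beta> = 0"
  shows "Re m + (Im m)^2/4 < 1"
proof -
  define z where "z = m^2"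
  have Rz: "Re z = Re m^2 - Im m^2" and Iz: "Im z = 2*Re m*Im m" unfolding z_def by (simp_all add: Re_power2 Im_power2)
  have E': "z^2 - of_real \<alpha> * z + of_real \<beta> = 0" using E unfolding z_def .
  have "Re (z^2 - of_real \<alpha> * z + of_real \<beta>) = 0" using E' by simp
  then have "(Re z)^2 - (Im z)^2 - \<alpha>*Re z + \<beta> = 0" by (simp add: Re_power2)
  then have E1: "(Re m^2 - Im m^2)^2 - (2*Re m*Im m)^2 - \<alpha>*(Re m^2 - Im m^2) + \<beta> = 0"
    unfolding Rz Iz .
  have "Im (z^2 - of_real \<alpha> * z + of_real \<beta>) = 0" using E' by simp
  then have "2*Re z*Im z - \<alpha>*Im z = 0" by (simp add: Im_power2)
  then have E2: "2*(Re m^2 - Im m^2)*(2*Re m*Im m) - \<alpha>*(2*Re m*Im m) = 0"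
    unfolding Rz Iz by (simp add: algebra_simps)
  show ?thesis using key_real[OF assms(1,2) C E1 E2] .
qed

lemma alg:
  fixes u v t h a b :: complex
  assumes hv: "h* v = 1" and t0: "t \<noteq> 0"
  shows "((u* v/t)^2)^2 - a*(u* v/t)^2 + b = (u^4 - a*t^2*u^2*h^2 + b*t^4*h^4) * v^4 / t^4"
proof -
  have "(u^4 - a*t^2*u^2*h^2 + b*t^4*h^4) * v^4 = u^4* v^4 - a*t^2*u^2* v^2*(h* v)^2 + b*t^4*(h* v)^4"
    by algebra
  also have "\<dots> = u^4* v^4 - a*t^2*u^2* v^2 + b*t^4" using hv by simp
  finally have e: "(u^4 - a*t^2*u^2*h^2 + b*t^4*h^4) * v^4 = u^4* v^4 - a*t^2*u^2* v^2 + b*t^4" .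
  have q: "(u* v/t)^2 = u^2* v^2/t^2" by (simp add: power_divide power_mult_distrib)
  have q2: "((u* v/t)^2)^2 = u^4* v^4/t^4" unfolding q by (simp add: power_divide power_mult_distrib flip: power_mult)
  have "u^4* v^4/t^4 - a*(u^2* v^2/t^2) + b = (u^4* v^4 - a*t^2*u^2* v^2 + b*t^4)/t^4"
    using t0 by (simp add: field_simps)
  then show ?thesis unfolding e q2 unfolding q .
qed

theorem mainTheorem10:
  fixes \<alpha> \<beta> :: real
  assumes "\<alpha> < 2" and "\<beta> > \<alpha> - 1"
    and "(-8 < \<alpha> \<and> \<alpha> < 2 \<and> -16 - 4*\<alpha> < \<beta> \<and> \<beta> < \<alpha>^2/4)
       \<or> (\<alpha>^2/4 \<le> \<beta> \<and> \<beta> \<le> 1)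
       \<or> (1 < \<beta> \<and> \<beta> < 16 \<and> \<beta> \<ge> \<alpha>^2/4 \<and> \<alpha> < 2 * (8 - 8 * root 4 \<beta> + sqrt \<beta>))"
  shows "\<forall>\<tau>>0. (\<forall>y::real. Phi \<alpha> \<beta> \<tau> (\<i> * of_real y) \<noteq> 0)
                 \<and> (\<forall>w. Phi \<alpha> \<beta> \<tau> w = 0 \<longrightarrow> Re w < 0)"
proof -
  have main: "Re w < 0" if tp: "\<tau> > 0" and Z: "Phi \<alpha> \<beta> \<tau> w = 0" for \<tau> w
  proof (rule ccontr)
    assume "\<not> Re w < 0"
    then have a0: "Re w \<ge> 0" by simp
    define a where "a = Re w"
    define b where "b = Im w"
    have wab: "w = Complex a b" by (simp add: a_def b_def)
    have v0: "1 + w \<noteq> 0"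
    proof
      assume "1 + w = 0"
      then have "Re (1 + w) = 0" by simp
      with a0 show False by simp
    qed
    have t0: "(of_real \<tau> :: complex) \<noteq> 0" using tp by simp
    define P where "P = (w + of_real \<tau>) * (w + 1)"
    define m where "m = P / of_real \<tau>"
    have hv: "Hhat w * (w+1) = 1" unfolding Hhat_def using v0 by (simp add: add.commute)
    have "(m^2)^2 - of_real \<alpha> * m^2 + of_real \<beta> = Phi \<alpha> \<beta> \<tau> w * (w+1)^4 / of_real \<tau>^4"
      unfolding m_def P_def Phi_def by (rule alg[OF hv t0])
    then have E: "(m^2)^2 - of_real \<alpha> * m^2 + of_real \<beta> = 0" using Z by simp
    have K: "Re m + (Im m)^2/4 < 1" using key_complex[OF assms E] .
    have ReP: "Re P = a^2 - b^2 + (1+\<tau>)*a + \<tau>" unfolding P_def wab by (simp add: power2_eq_square algebra_simps)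
    have ImP: "Im P = b*(2*a+1+\<tau>)" unfolding P_def wab by (simp add: algebra_simps)
    have Rm: "Re m = Re P / \<tau>" unfolding m_def by (simp add: Re_divide_of_real)
    have Im: "Im m = Im P / \<tau>" unfolding m_def by (simp add: Im_divide_of_real)
    have a0': "a \<ge> 0" using a0 unfolding a_def .
    have "(2*a+1+\<tau>)^2 \<ge> (1+\<tau>)^2" using a0' tp by (intro power_mono) auto
    moreover have "(1+\<tau>)^2 - 4*\<tau> = (1-\<tau>)^2" by (simp add: power2_eq_square algebra_simps)
    then have "(1+\<tau>)^2 \<ge> 4*\<tau>" by (metis diff_ge_0_iff_ge zero_le_power2)
    ultimately have h4: "(2*a+1+\<tau>)^2 \<ge> 4*\<tau>" by linarith
    have "(Im P)^2 = b^2 * (2*a+1+\<tau>)^2" unfolding ImP by (simp add: power_mult_distrib)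
    also have "\<dots> \<ge> b^2 * (4*\<tau>)" using h4 by (intro mult_left_mono) auto
    finally have IP: "(Im P)^2 \<ge> b^2 * (4*\<tau>)" .
    have "(Im m)^2/4 = (Im P)^2/(4*\<tau>^2)" unfolding Im by (simp add: power_divide)
    also have "\<dots> \<ge> b^2 * (4*\<tau>)/(4*\<tau>^2)" using IP tp by (intro divide_right_mono) auto
    also have "b^2 * (4*\<tau>)/(4*\<tau>^2) = b^2/\<tau>" using tp by (simp add: power2_eq_square)
    finally have I2: "(Im m)^2/4 \<ge> b^2/\<tau>" .
    have Req: "Re m = 1 - b^2/\<tau> + (a^2 + (1+\<tau>)*a)/\<tau>" using tp unfolding Rm ReP by (simp add: field_simps)
    have "(a^2 + (1+\<tau>)*a)/\<tau> \<ge> 0" using a0' tp by (intro divide_nonneg_pos add_nonneg_nonneg mult_nonneg_nonneg) auto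
    then have "Re m \<ge> 1 - b^2/\<tau>" unfolding Req by linarith
    with I2 show False using K by linarith
  qed
  show ?thesis
  proof (intro allI impI conjI)
    fix \<tau> :: real and y assume "\<tau> > 0"
    show "Phi \<alpha> \<beta> \<tau> (\<i> * of_real y) \<noteq> 0" using main[OF \<open>\<tau> > 0\<close>, of "\<i> * of_real y"] by auto
  next
    fix \<tau> :: real and w assume "\<tau> > 0" "Phi \<alpha> \<beta> \<tau> w = 0"
    then show "Re w < 0" using main by blast
  qed
qed

end
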